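(* Let $G=(\mathcal{Y},E,f)$ be a curl consistent weighted digraph and let $C^{(i)},C^{(j)}\in\mathcal{Y}$ be distinct with neither $(C^{(i)},C^{(j)})$ nor $(C^{(j)},C^{(i)})$ in $E$. Let $\mathcal{B}^{(ij)}$ be the set of paths in $G$ from $C^{(i)}$ to $C^{(j)}$ and $\mathcal{B}^{(ji)}$ the set of paths from $C^{(j)}$ to $C^{(i)}$ (a minimum over the empty set is $+\infty$). If $x\in\mathbb{R}$ is such that the weighted digraph obtained from $G$ by adding the edge $(C^{(i)},C^{(j)})$ with weight $x$ is curl consistent, then $$1-\min_{\overline{B}\in\mathcal{B}^{(ji)}}W(G,\overline{B})<x<\min_{B\in\mathcal{B}^{(ij)}}W(G,B).$$
   Context: A weighted digraph $G=(\mathcal{Y},E,f)$ has $E$ a set of ordered pairs of distinct vertices and $f:E\to\mathbb{R}$, extended to reversed pairs by $f(b,a)=1-f(a,b)$; an edge may be traversed in either direction using this convention. A cycle is a sequence $(c_1,\dots,c_\ell)$ of $\ell\ge3$ pairwise distinct vertices with each consecutive pair and $(c_\ell,c_1)$ an edge in either direction; its curl is $f(c_\ell,c_1)+\sum_{t=1}^{\ell-1}f(c_t,c_{t+1})$. $G$ is curl consistent (a CCWD) if every cycle of length $\ell$ has curl strictly between $1$ and $\ell-1$. A path $B=(b_1,\dots,b_q)$ is a sequence of pairwise distinct vertices with consecutive pairs edges (in either direction); its weight is $W(G,B)=\sum_{t=1}^{q-1}f(b_t,b_{t+1})$. *)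

theory Defs
  imports Main "HOL-Library.Extended_Real"
begin

definition wdigraph :: "'a set \<Rightarrow> ('a \<times> 'a) set \<Rightarrow> bool" where
  "wdigraph Y E \<longleftrightarrow> finite Y \<and> E \<subseteq> Y \<times> Y \<and> (\<forall>(a,b)\<in>E. a \<noteq> b \<and> (b,a) \<notin> E)"

definition adj :: "('a \<times> 'a) set \<Rightarrow> 'a \<Rightarrow> 'a \<Rightarrow> bool" where
  "adj E a b \<longleftrightarrow> (a,b) \<in> E \<or> (b,a) \<in> E"

definition fw :: "('a \<times> 'a) set \<Rightarrow> ('a \<times> 'a \<Rightarrow> real) \<Rightarrow> 'a \<Rightarrow> 'a \<Rightarrow> real" where
  "fw E f a b = (if (a,b) \<in> E then f (a,b) else 1 - f (b,a))"

definition is_cycle :: "'a set \<Rightarrow> ('a \<times> 'a) set \<Rightarrow> 'a list \<Rightarrow> bool" where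
  "is_cycle Y E cs \<longleftrightarrow> length cs \<ge> 3 \<and> distinct cs \<and> set cs \<subseteq> Y \<and>
     (\<forall>t < length cs. adj E (cs ! t) (cs ! ((t + 1) mod length cs)))"

definition curl :: "('a \<times> 'a) set \<Rightarrow> ('a \<times> 'a \<Rightarrow> real) \<Rightarrow> 'a list \<Rightarrow> real" where
  "curl E f cs = (\<Sum>t < length cs. fw E f (cs ! t) (cs ! ((t + 1) mod length cs)))"

definition CCWD :: "'a set \<Rightarrow> ('a \<times> 'a) set \<Rightarrow> ('a \<times> 'a \<Rightarrow> real) \<Rightarrow> bool" where
  "CCWD Y E f \<longleftrightarrow> wdigraph Y E \<and>
     (\<forall>cs. is_cycle Y E cs \<longrightarrow> 1 < curl E f cs \<and> curl E f cs < real (length cs) - 1)"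

definition is_path :: "'a set \<Rightarrow> ('a \<times> 'a) set \<Rightarrow> 'a list \<Rightarrow> bool" where
  "is_path Y E bs \<longleftrightarrow> bs \<noteq> [] \<and> distinct bs \<and> set bs \<subseteq> Y \<and>
     (\<forall>t. t + 1 < length bs \<longrightarrow> adj E (bs ! t) (bs ! (t + 1)))"

definition paths :: "'a set \<Rightarrow> ('a \<times> 'a) set \<Rightarrow> 'a \<Rightarrow> 'a \<Rightarrow> 'a list set" where
  "paths Y E a b = {bs. is_path Y E bs \<and> hd bs = a \<and> last bs = b}"

definition W :: "('a \<times> 'a) set \<Rightarrow> ('a \<times> 'a \<Rightarrow> real) \<Rightarrow> 'a list \<Rightarrow> real" where
  "W E f bs = (\<Sum>t < length bs - 1. fw E f (bs ! t) (bs ! (t + 1)))"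

text \<open>Minimum over a set of paths in the extended reals (min over the empty set = +infinity).\<close>
definition minW :: "('a \<times> 'a) set \<Rightarrow> ('a \<times> 'a \<Rightarrow> real) \<Rightarrow> 'a list set \<Rightarrow> ereal" where
  "minW E f P = (INF B\<in>P. ereal (W E f B))"

end

theory Submission
  imports Defs
begin

lemma one_minus_inf_less: "(1::ereal) - \<infinity> < ereal x"
  unfolding one_ereal_def by (simp only: ereal_minus) simp

lemma one_minus_ereal_less: "1 - w < (x::real) \<Longrightarrow> 1 - ereal w < ereal x"
  unfolding one_ereal_def by (simp only: ereal_minus) simp

lemma paths_finite:
  assumes "finite Y" shows "finite (paths Y E a b)"
proof (rule finite_subset[OF _ finite_lists_length_le[OF assms, of "card Y"]])
  show "paths Y E a b \<subseteq> {xs. set xs \<subseteq> Y \<and> length xs \<le> card Y}"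
  proof
    fix xs assume "xs \<in> paths Y E a b"
    then have d: "distinct xs" and s: "set xs \<subseteq> Y" unfolding paths_def is_path_def by blast+
    have "length xs = card (set xs)" using distinct_card[OF d] by (rule sym)
    also have "\<dots> \<le> card Y" by (rule card_mono[OF assms s])
    finally show "xs \<in> {xs. set xs \<subseteq> Y \<and> length xs \<le> card Y}" using s by blast
  qed
qed

lemma INF_attained:
  fixes g :: "'b \<Rightarrow> ereal"
  assumes "finite P" "P \<noteq> {}"
  shows "\<exists>B\<in>P. (INF b\<in>P. g b) = g B"
proof -
  have f: "finite (g ` P)" using assms(1) by (rule finite_imageI)
  have n: "g ` P \<noteq> {}" using assms(2) by blast
  have "(INF b\<in>P. g b) = Min (g ` P)" by (rule cInf_eq_Min[OF f n])
  moreover have "Min (g ` P) \<in> g ` P" by (rule Min_in[OF f n])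
  ultimately show ?thesis by (simp only: image_iff)
qed

lemma key:
  assumes wd: "wdigraph Y E"
    and E': "E' = insert (ci, cj) E" and f': "f' = f((ci, cj) := x)"
    and ci: "ci \<in> Y" and cj: "cj \<in> Y" and ne: "ci \<noteq> cj"
    and n1: "(ci, cj) \<notin> E" and n2: "(cj, ci) \<notin> E"
    and cc: "CCWD Y E' f'"
    and p: "is_path Y E bs" and hl: "{hd bs, last bs} = {ci, cj}"
  shows "1 < W E f bs + fw E' f' (last bs) (hd bs)"
proof -
  define q where "q = length bs"
  have bsne: "bs \<noteq> []" and dist: "distinct bs" and sY: "set bs \<subseteq> Y"
    and adjs: "\<And>t. t + 1 < q \<Longrightarrow> adj E (bs ! t) (bs ! (t + 1))"
    using p by (auto simp: is_path_def q_def)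
  have hdl: "hd bs \<noteq> last bs" using hl ne by auto
  have q2: "q \<ge> 2"
  proof (rule ccontr)
    assume "\<not> q \<ge> 2"
    moreover have "length bs > 0" using bsne by simp
    ultimately have "length bs = 1" using q_def by linarith
    then have "bs = [hd bs]" by (cases bs) auto
    then show False using hdl by (metis last_ConsL)
  qed
  have hd0: "bs ! 0 = hd bs" using bsne by (simp add: hd_conv_nth)
  have lastq: "bs ! (q - 1) = last bs" using bsne q_def by (simp add: last_conv_nth)
  have q3: "q \<ge> 3"
  proof (rule ccontr)
    assume "\<not> q \<ge> 3"
    then have "q = 2" using q2 by auto
    then have "adj E (bs ! 0) (bs ! 1)" using adjs[of 0] by auto
    then have "adj E (hd bs) (last bs)" using hd0 lastq \<open>q = 2\<close> by simp
    then show False using hl n1 n2 ne unfolding adj_def by (auto simp: doubleton_eq_iff)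
  qed
  have adjE': "\<And>a b. adj E a b \<Longrightarrow> adj E' a b" using E' by (auto simp: adj_def)
  have cyc: "is_cycle Y E' bs"
    unfolding is_cycle_def
  proof (intro conjI allI impI)
    show "3 \<le> length bs" using q3 q_def by simp
    show "distinct bs" by fact
    show "set bs \<subseteq> Y" by fact
    fix t assume t: "t < length bs"
    show "adj E' (bs ! t) (bs ! ((t + 1) mod length bs))"
    proof (cases "t + 1 < q")
      case True
      then show ?thesis using adjs[OF True] adjE' q_def by simp
    next
      case False
      then have "t = q - 1" using t q_def by simp
      then have "t + 1 = length bs" using q_def q2 by simp
      then have "(t + 1) mod length bs = 0" by simp
      moreover have "adj E' (last bs) (hd bs)" using hl E' ne unfolding adj_def
        by (auto simp: doubleton_eq_iff)
      ultimately show ?thesis using \<open>t = q - 1\<close> lastq hd0 by simp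
    qed
  qed
  have fweq: "fw E' f' a b = fw E f a b" if ab0: "adj E a b" for a b
  proof -
    have ab: "(a,b) \<noteq> (ci,cj)" "(b,a) \<noteq> (ci,cj)" using ab0 n1 n2 unfolding adj_def by auto
    have "(a,b) \<in> E' \<longleftrightarrow> (a,b) \<in> E" using ab(1) E' by auto
    moreover have "f' (a,b) = f (a,b)" "f' (b,a) = f (b,a)" using ab f' by auto
    ultimately show ?thesis unfolding fw_def by simp
  qed
  have qs: "Suc (q - 1) = q" using q2 by simp
  have "curl E' f' bs = (\<Sum>t < q. fw E' f' (bs ! t) (bs ! ((t + 1) mod q)))"
    unfolding curl_def q_def by (rule refl)
  also have "\<dots> = (\<Sum>t < Suc (q - 1). fw E' f' (bs ! t) (bs ! ((t + 1) mod q)))"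
    by (simp only: qs)
  also have "\<dots> = (\<Sum>t < q - 1. fw E' f' (bs ! t) (bs ! ((t + 1) mod q)))
      + fw E' f' (bs ! (q - 1)) (bs ! ((q - 1 + 1) mod q))"
    by (rule sum.lessThan_Suc)
  also have "(\<Sum>t < q - 1. fw E' f' (bs ! t) (bs ! ((t + 1) mod q)))
      = (\<Sum>t < q - 1. fw E f (bs ! t) (bs ! (t + 1)))"
  proof (rule sum.cong)
    fix t assume "t \<in> {..<q - 1}"
    then have "t + 1 < q" by auto
    then show "fw E' f' (bs ! t) (bs ! ((t + 1) mod q)) = fw E f (bs ! t) (bs ! (t + 1))"
      using fweq[OF adjs] by simp
  qed simp
  also have "\<dots> = W E f bs" unfolding W_def q_def by simp
  finally have c1: "curl E' f' bs = W E f bs + fw E' f' (bs ! (q - 1)) (bs ! ((q - 1 + 1) mod q))" .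
  have hq: "bs ! ((q - 1 + 1) mod q) = hd bs" using qs hd0 by simp
  have "curl E' f' bs = W E f bs + fw E' f' (last bs) (hd bs)"
    using c1 by (simp only: hq lastq)
  moreover have "1 < curl E' f' bs"
  proof -
    have allc: "\<forall>cs. is_cycle Y E' cs \<longrightarrow> 1 < curl E' f' cs \<and> curl E' f' cs < real (length cs) - 1"
      using cc unfolding CCWD_def by (rule conjunct2)
    show ?thesis using allc[rule_format, OF cyc] by (rule conjunct1)
  qed
  ultimately show ?thesis by simp
qed

theorem lemma2:
  fixes Y :: "'a set" and E :: "('a \<times> 'a) set" and f :: "'a \<times> 'a \<Rightarrow> real"
    and ci cj :: 'a and x :: real
  assumes "CCWD Y E f"
    and "ci \<in> Y" and "cj \<in> Y" and "ci \<noteq> cj"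
    and "(ci, cj) \<notin> E" and "(cj, ci) \<notin> E"
    and "CCWD Y (insert (ci, cj) E) (f((ci, cj) := x))"
  shows "1 - minW E f (paths Y E cj ci) < ereal x \<and> ereal x < minW E f (paths Y E ci cj)"
proof
  have wd: "wdigraph Y E" using assms(1) by (simp add: CCWD_def)
  then have fin: "finite Y" by (simp add: wdigraph_def)
  have fwa: "fw (insert (ci, cj) E) (f((ci, cj) := x)) cj ci = 1 - x"
    using assms(4,6) by (simp add: fw_def)
  have fwb: "fw (insert (ci, cj) E) (f((ci, cj) := x)) ci cj = x"
    by (simp add: fw_def)
  show "ereal x < minW E f (paths Y E ci cj)"
  proof (cases "paths Y E ci cj = {}")
    case True then show ?thesis by (simp add: minW_def top_ereal_def)
  next
    case False
    have h1: "\<forall>b\<in>(\<lambda>B. ereal (W E f B)) ` paths Y E ci cj. ereal x < b"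
    proof
      fix b assume "b \<in> (\<lambda>B. ereal (W E f B)) ` paths Y E ci cj"
      then obtain B where B: "B \<in> paths Y E ci cj" "b = ereal (W E f B)" by auto
      have P: "is_path Y E B" "hd B = ci" "last B = cj" using B(1) by (simp_all add: paths_def)
      have "{hd B, last B} = {ci, cj}" unfolding P(2,3) by (rule refl)
      from key[OF wd refl refl assms(2-7) P(1) this]
      have "1 < W E f B + fw (insert (ci, cj) E) (f((ci, cj) := x)) (last B) (hd B)" .
      then have "1 < W E f B + (1 - x)" unfolding P(2,3) fwa .
      then have "x < W E f B" by linarith
      then show "ereal x < b" unfolding B(2) by simp
    qed
    have h2: "finite ((\<lambda>B. ereal (W E f B)) ` paths Y E ci cj)"
      using paths_finite[OF fin] by simp
    have h3: "(\<lambda>B. ereal (W E f B)) ` paths Y E ci cj \<noteq> {}" using False by simp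
    have "ereal x < Inf ((\<lambda>B. ereal (W E f B)) ` paths Y E ci cj)"
      by (rule finite_less_Inf_iff[OF h2 h3, THEN iffD2, OF h1])
    then show ?thesis unfolding minW_def .
  qed
  show "1 - minW E f (paths Y E cj ci) < ereal x"
  proof (cases "paths Y E cj ci = {}")
    case True
    then have inf: "minW E f (paths Y E cj ci) = \<infinity>" by (simp add: minW_def top_ereal_def)
    show ?thesis unfolding inf by (rule one_minus_inf_less)
  next
    case False
    from INF_attained[OF paths_finite[OF fin] False, of "\<lambda>b. ereal (W E f b)"]
    obtain B where B: "B \<in> paths Y E cj ci"
      and eq0: "(INF b\<in>paths Y E cj ci. ereal (W E f b)) = ereal (W E f B)" ..
    have eq: "minW E f (paths Y E cj ci) = ereal (W E f B)" unfolding minW_def by (rule eq0)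
    have P: "is_path Y E B" "hd B = cj" "last B = ci" using B(1) by (simp_all add: paths_def)
    have "{hd B, last B} = {ci, cj}" unfolding P(2,3) by (rule insert_commute)
    from key[OF wd refl refl assms(2-7) P(1) this]
    have "1 < W E f B + fw (insert (ci, cj) E) (f((ci, cj) := x)) (last B) (hd B)" .
    then have "1 < W E f B + x" unfolding P(2,3) fwb .
    then have "1 - W E f B < x" by linarith
    then have "1 - ereal (W E f B) < ereal x" by (rule one_minus_ereal_less)
    then show ?thesis by (subst eq)
  qed
qed

end
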